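(* Let $\mathcal{Z}=\{z_1,\dots,z_K\}$, $p_i>0$ with $\sum_i p_i=1$, and $\omega_{ij}=\omega_{ji}\ge0$. Let $G$ be the graph on $\{1,\dots,K\}$ with an edge between $i\neq j$ whenever $\omega_{ij}>0$. Then a function $f:\mathcal{Z}\to\mathbb{R}$ minimizes $$\mathcal{L}_{\omega,\mathrm{disc}}(f)=\sum_{i=1}^K\sum_{j=1}^K p_i\,\omega_{ij}\left[\tanh\!\left(\frac{f(z_i)-f(z_j)}{2}\right)-1\right]^2$$ over all functions $\mathcal{Z}\to\mathbb{R}$ if and only if $f(z_i)-\log p_i$ is constant on each connected component of $G$. In particular, if $G$ is connected, the minimizers are exactly $f(z_i)=\log p_i+C$, $C\in\mathbb{R}$. *)

theory Defs
  imports Complex_Main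
begin

definition L_disc :: "nat \<Rightarrow> (nat \<Rightarrow> real) \<Rightarrow> (nat \<Rightarrow> nat \<Rightarrow> real) \<Rightarrow> (nat \<Rightarrow> 'a) \<Rightarrow> ('a \<Rightarrow> real) \<Rightarrow> real" where
  "L_disc K p \<omega> z f =
     (\<Sum>i=1..K. \<Sum>j=1..K. p i * \<omega> i j * (tanh ((f (z i) - f (z j)) / 2) - 1)\<^sup>2)"

definition G_edge :: "nat \<Rightarrow> (nat \<Rightarrow> nat \<Rightarrow> real) \<Rightarrow> nat \<Rightarrow> nat \<Rightarrow> bool" where
  "G_edge K \<omega> i j \<longleftrightarrow> i \<in> {1..K} \<and> j \<in> {1..K} \<and> i \<noteq> j \<and> \<omega> i j > 0"

definition G_conn :: "nat \<Rightarrow> (nat \<Rightarrow> nat \<Rightarrow> real) \<Rightarrow> nat \<Rightarrow> nat \<Rightarrow> bool" where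
  "G_conn K \<omega> i j \<longleftrightarrow> i \<in> {1..K} \<and> j \<in> {1..K} \<and> (G_edge K \<omega>)\<^sup>*\<^sup>* i j"

definition G_connected :: "nat \<Rightarrow> (nat \<Rightarrow> nat \<Rightarrow> real) \<Rightarrow> bool" where
  "G_connected K \<omega> \<longleftrightarrow> (\<forall>i\<in>{1..K}. \<forall>j\<in>{1..K}. G_conn K \<omega> i j)"

end

theory Submission imports Defs begin
lemma tanh_m1: "tanh ((d::real)/2) - 1 = -2 / (exp d + 1)"
proof -
  define E where "E = exp d"
  have E: "E > 0" unfolding E_def by simp
  have e: "exp (-d) = 1 / E" unfolding E_def by (simp add: exp_minus field_simps)
  have "tanh (d/2) = (1 - 1/E) / (1 + 1/E)" using e by (simp add: tanh_real_altdef)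
  also have "\<dots> = (E - 1)/(E+1)"
  proof -
    have "1 - 1/E = (E-1)/E" "1+1/E = (E+1)/E" using E by (simp_all add: field_simps)
    then show ?thesis using E by simp
  qed
  finally have "tanh (d/2) - 1 = (E - 1)/(E+1) - 1" by simp
  also have "\<dots> = -2/(E+1)" using E by (simp add: field_simps)
  finally show ?thesis unfolding E_def .
qed

lemma pair_id:
  fixes a b d :: real assumes a: "a > 0" and b: "b > 0"
  shows "a*(tanh (d/2) - 1)^2 + b*(tanh ((-d)/2) - 1)^2
         = 4*a*b/(a+b) + 4*(b*exp d - a)^2/((a+b)*(1+exp d)^2)"
proof -
  define E where "E = exp d"
  have E: "E > 0" unfolding E_def by simp
  have m: "exp (-d) = 1/E" unfolding E_def by (simp add: exp_minus field_simps)
  have "a*(tanh (d/2) - 1)^2 + b*(tanh ((-d)/2) - 1)^2 = a*(-2/(E+1))^2 + b*(-2/(1/E+1))^2"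
    using tanh_m1[of d] tanh_m1[of "-d"] unfolding E_def m[unfolded E_def] by simp
  also have "b*(-2/(1/E+1))^2 = b*(2*E/(E+1))^2" using E by (simp add: field_simps)
  also have "a*(-2/(E+1))^2 + b*(2*E/(E+1))^2 = 4*(a + b*E^2)/(E+1)^2"
    using E by (simp add: power_divide field_simps)
  also have "\<dots> = 4*a*b/(a+b) + 4*(b*E - a)^2/((a+b)*(1+E)^2)"
  proof -
    have gen: "4*N/S = 4*a*b/T + 4*Q/(T*S)" if "N*T = a*b*S + Q" "S > 0" "T > 0" for N S T Q :: real
      using that by (simp add: field_simps)
    have "(a + b*E^2)*(a+b) = a*b*(1+E)^2 + (b*E - a)^2" by (simp add: power2_eq_square algebra_simps)
    moreover have "(E+1)^2 = (1+E)^2" by (simp add: add.commute)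
    moreover have "(1+E)^2 > 0" using E by simp
    ultimately show ?thesis using gen[of "a + b*E^2" "a+b" "(1+E)^2" "(b*E - a)^2"] a b by simp
  qed
  finally show ?thesis unfolding E_def .
qed

lemma pair_ge:
  fixes a b d :: real assumes a: "a > 0" and b: "b > 0"
  shows "a*(tanh (d/2) - 1)^2 + b*(tanh ((-d)/2) - 1)^2 \<ge> 4*a*b/(a+b)"
    and "a*(tanh (d/2) - 1)^2 + b*(tanh ((-d)/2) - 1)^2 = 4*a*b/(a+b) \<longleftrightarrow> d = ln a - ln b"
proof -
  have "1 + exp d > 0" using exp_gt_zero[of d] by linarith
  then have "(1+exp d)^2 > 0" by simp
  then have pos: "(a+b)*(1+exp d)^2 > 0" using a b by simp
  show "a*(tanh (d/2) - 1)^2 + b*(tanh ((-d)/2) - 1)^2 \<ge> 4*a*b/(a+b)"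
    unfolding pair_id[OF a b] using pos by simp
  have "a*(tanh (d/2) - 1)^2 + b*(tanh ((-d)/2) - 1)^2 = 4*a*b/(a+b) \<longleftrightarrow> b*exp d - a = 0"
    unfolding pair_id[OF a b] using pos a b \<open>1 + exp d > 0\<close> by simp
  also have "\<dots> \<longleftrightarrow> exp d = a / b" using b by (auto simp: field_simps)
  also have "\<dots> \<longleftrightarrow> d = ln (a/b)" using a b by (metis divide_pos_pos exp_ln ln_exp)
  also have "\<dots> \<longleftrightarrow> d = ln a - ln b" using a b by (simp add: ln_div)
  finally show "a*(tanh (d/2) - 1)^2 + b*(tanh ((-d)/2) - 1)^2 = 4*a*b/(a+b) \<longleftrightarrow> d = ln a - ln b" .
qed

theorem mainTheorem5:
  fixes K :: nat and z :: "nat \<Rightarrow> 'a" and p :: "nat \<Rightarrow> real"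
    and \<omega> :: "nat \<Rightarrow> nat \<Rightarrow> real" and f :: "'a \<Rightarrow> real"
  assumes inj: "inj_on z {1..K}"
    and ppos: "\<forall>i\<in>{1..K}. p i > 0"
    and psum: "(\<Sum>i=1..K. p i) = 1"
    and wsym: "\<forall>i\<in>{1..K}. \<forall>j\<in>{1..K}. \<omega> i j = \<omega> j i"
    and wnn: "\<forall>i\<in>{1..K}. \<forall>j\<in>{1..K}. \<omega> i j \<ge> 0"
  shows "((\<forall>g :: 'a \<Rightarrow> real. L_disc K p \<omega> z f \<le> L_disc K p \<omega> z g)
           \<longleftrightarrow> (\<forall>i j. G_conn K \<omega> i j \<longrightarrow> f (z i) - ln (p i) = f (z j) - ln (p j)))
       \<and> (G_connected K \<omega> \<longrightarrow>
           ((\<forall>g :: 'a \<Rightarrow> real. L_disc K p \<omega> z f \<le> L_disc K p \<omega> z g)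
            \<longleftrightarrow> (\<exists>C::real. \<forall>i\<in>{1..K}. f (z i) = ln (p i) + C)))"
proof -
  define I where "I = {1..K}"
  define T where "T y i j = p i * \<omega> i j * (tanh ((y i - y j)/2) - 1)^2" for y :: "nat \<Rightarrow> real" and i j
  define M where "M i j = \<omega> i j * (4 * p i * p j / (p i + p j))" for i j
  define S where "S y = (\<Sum>i\<in>I. \<Sum>j\<in>I. T y i j)" for y
  define D where "D y i j = T y i j + T y j i - M i j" for y i j
  have LS: "L_disc K p \<omega> z g = S (\<lambda>i. g (z i))" for g
    unfolding L_disc_def S_def T_def I_def by simp
  have pair: "T y i j + T y j i \<ge> M i j \<and>
      (T y i j + T y j i = M i j \<longleftrightarrow> (\<omega> i j = 0 \<or> y i - ln (p i) = y j - ln (p j)))"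
    if i: "i \<in> I" and j: "j \<in> I" for y i j
  proof -
    define d where "d = y i - y j"
    have a: "p i > 0" and b: "p j > 0" using i j ppos I_def by auto
    have w: "\<omega> j i = \<omega> i j" "\<omega> i j \<ge> 0" using i j wsym wnn I_def by auto
    have "(y j - y i)/2 = (-d)/2" unfolding d_def by simp
    then have eq: "T y i j + T y j i = \<omega> i j * (p i*(tanh (d/2) - 1)^2 + p j*(tanh ((-d)/2) - 1)^2)"
      unfolding T_def d_def w(1) by (simp add: algebra_simps)
    note g = pair_ge[OF a b, of d]
    have "T y i j + T y j i \<ge> M i j" unfolding eq M_def using mult_left_mono[OF g(1) w(2)] by simp
    moreover have "(T y i j + T y j i = M i j) \<longleftrightarrow> (\<omega> i j = 0 \<or> d = ln (p i) - ln (p j))"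
      unfolding eq M_def mult_cancel_left g(2) by (rule refl)
    ultimately show ?thesis unfolding d_def by auto
  qed
  have Dnn: "D y i j \<ge> 0" if "i \<in> I" "j \<in> I" for y i j
    using pair[OF that, of y] unfolding D_def by simp
  have twoS: "2 * S y = (\<Sum>i\<in>I. \<Sum>j\<in>I. M i j) + (\<Sum>i\<in>I. \<Sum>j\<in>I. D y i j)" for y
  proof -
    have "(\<Sum>i\<in>I. \<Sum>j\<in>I. T y j i) = S y" unfolding S_def by (rule sum.swap)
    then have "2 * S y = (\<Sum>i\<in>I. \<Sum>j\<in>I. T y i j + T y j i)"
      unfolding S_def sum.distrib by simp
    also have "\<dots> = (\<Sum>i\<in>I. \<Sum>j\<in>I. M i j + D y i j)" unfolding D_def by simp
    finally show ?thesis unfolding sum.distrib .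
  qed
  define E where "E y \<longleftrightarrow> (\<forall>i\<in>I. \<forall>j\<in>I. \<omega> i j = 0 \<or> y i - ln (p i) = y j - ln (p j))" for y
  have Dz: "(\<Sum>i\<in>I. \<Sum>j\<in>I. D y i j) = 0 \<longleftrightarrow> E y" for y
  proof -
    have fin: "finite I" unfolding I_def by simp
    have "(\<Sum>i\<in>I. \<Sum>j\<in>I. D y i j) = 0 \<longleftrightarrow> (\<forall>i\<in>I. (\<Sum>j\<in>I. D y i j) = 0)"
      using fin Dnn by (intro sum_nonneg_eq_0_iff) (auto intro: sum_nonneg)
    also have "\<dots> \<longleftrightarrow> (\<forall>i\<in>I. \<forall>j\<in>I. D y i j = 0)"
      using fin Dnn by (simp add: sum_nonneg_eq_0_iff)
    also have "\<dots> \<longleftrightarrow> E y" unfolding E_def D_def using pair by auto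
    finally show ?thesis .
  qed
  have Dge: "(\<Sum>i\<in>I. \<Sum>j\<in>I. D y i j) \<ge> 0" for y
    using Dnn by (auto intro!: sum_nonneg)
  define g0 where "g0 w = ln (p (the_inv_into I z w))" for w
  have g0z: "g0 (z i) = ln (p i)" if "i \<in> I" for i
    unfolding g0_def using the_inv_into_f_f[OF inj[folded I_def] that] by simp
  have Eg0: "E (\<lambda>i. g0 (z i))" unfolding E_def using g0z by auto
  let ?x = "\<lambda>i. f (z i)"
  have part1: "(\<forall>g :: 'a \<Rightarrow> real. L_disc K p \<omega> z f \<le> L_disc K p \<omega> z g) \<longleftrightarrow> E ?x"
  proof
    assume h: "\<forall>g :: 'a \<Rightarrow> real. L_disc K p \<omega> z f \<le> L_disc K p \<omega> z g"
    have "S ?x \<le> S (\<lambda>i. g0 (z i))" using h[rule_format, of g0] unfolding LS .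
    then have "(\<Sum>i\<in>I. \<Sum>j\<in>I. D ?x i j) \<le> (\<Sum>i\<in>I. \<Sum>j\<in>I. D (\<lambda>i. g0 (z i)) i j)"
      using twoS[of ?x] twoS[of "\<lambda>i. g0 (z i)"] by linarith
    also have "\<dots> = 0" using Dz Eg0 by blast
    finally show "E ?x" using Dz Dge[of ?x] by (meson antisym)
  next
    assume "E ?x"
    then have "(\<Sum>i\<in>I. \<Sum>j\<in>I. D ?x i j) = 0" using Dz by blast
    then show "\<forall>g :: 'a \<Rightarrow> real. L_disc K p \<omega> z f \<le> L_disc K p \<omega> z g"
      unfolding LS using twoS Dge by (metis add.right_neutral add_le_cancel_left mult_le_cancel_left_pos zero_less_numeral)
  qed
  define h where "h i = f (z i) - ln (p i)" for i
  have edge_h: "h i = h j" if "G_edge K \<omega> i j" "E ?x" for i j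
  proof -
    have "i \<in> I" "j \<in> I" "\<omega> i j \<noteq> 0" using that(1) unfolding G_edge_def I_def by auto
    then show ?thesis using that(2) unfolding E_def h_def by blast
  qed
  have comp: "E ?x \<longleftrightarrow> (\<forall>i j. G_conn K \<omega> i j \<longrightarrow> h i = h j)"
  proof
    assume e: "E ?x"
    show "\<forall>i j. G_conn K \<omega> i j \<longrightarrow> h i = h j"
    proof (intro allI impI)
      fix i j assume "G_conn K \<omega> i j"
      then have "(G_edge K \<omega>)\<^sup>*\<^sup>* i j" unfolding G_conn_def by simp
      then show "h i = h j"
        by (induction rule: rtranclp_induct) (use edge_h e in auto)
    qed
  next
    assume c: "\<forall>i j. G_conn K \<omega> i j \<longrightarrow> h i = h j"
    show "E ?x" unfolding E_def
    proof (intro ballI)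
      fix i j assume i: "i \<in> I" and j: "j \<in> I"
      show "\<omega> i j = 0 \<or> ?x i - ln (p i) = ?x j - ln (p j)"
      proof (cases "i = j \<or> \<omega> i j = 0")
        case True then show ?thesis by auto
      next
        case False
        then have "\<omega> i j > 0" using wnn i j I_def by force
        then have "G_edge K \<omega> i j" using False i j unfolding G_edge_def I_def by auto
        then have "G_conn K \<omega> i j" unfolding G_conn_def using i j I_def by auto
        then show ?thesis using c unfolding h_def by auto
      qed
    qed
  qed
  have part2: "G_connected K \<omega> \<longrightarrow>
      ((\<forall>i j. G_conn K \<omega> i j \<longrightarrow> h i = h j) \<longleftrightarrow> (\<exists>C::real. \<forall>i\<in>{1..K}. f (z i) = ln (p i) + C))"
  proof
    assume gc: "G_connected K \<omega>"
    show "(\<forall>i j. G_conn K \<omega> i j \<longrightarrow> h i = h j) \<longleftrightarrow> (\<exists>C::real. \<forall>i\<in>{1..K}. f (z i) = ln (p i) + C)"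
    proof
      assume c: "\<forall>i j. G_conn K \<omega> i j \<longrightarrow> h i = h j"
      show "\<exists>C::real. \<forall>i\<in>{1..K}. f (z i) = ln (p i) + C"
      proof (intro exI ballI)
        fix i assume i: "i \<in> {1..K}"
        then have "G_conn K \<omega> i 1" using gc unfolding G_connected_def by auto
        then have "h i = h 1" using c by blast
        then show "f (z i) = ln (p i) + h 1" unfolding h_def by simp
      qed
    next
      assume "\<exists>C::real. \<forall>i\<in>{1..K}. f (z i) = ln (p i) + C"
      then obtain C where C: "\<forall>i\<in>{1..K}. f (z i) = ln (p i) + C" by blast
      show "\<forall>i j. G_conn K \<omega> i j \<longrightarrow> h i = h j"
        unfolding G_conn_def h_def using C by auto
    qed
  qed
  show ?thesis using part1 comp part2 unfolding h_def by simp
qed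

end
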